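(* Let $\mathcal{H}$ be finite-dimensional with Hamiltonian $H$, $\mathcal{C}=\{P_i\}$ nonzero mutually orthogonal projectors summing to $I$, $V_i=\mathrm{tr}[P_i]$, $\rho$ a density operator, $p_i=\mathrm{tr}[P_i\rho]$, $\rho_{\mathrm{cg}}=\sum_i\frac{p_i}{V_i}P_i$. Define $$W_{\mathcal{C}}^B(\rho)=\mathrm{tr}[H\rho]-\sum_ip_i\min_U\mathrm{tr}[HU(P_i/V_i)U^\dagger],\qquad W_{\mathcal{C}}(\rho)=\mathrm{tr}[H\rho]-\min_U\mathrm{tr}[HU\rho_{\mathrm{cg}}U^\dagger],$$ and, assuming there exist $\beta,\beta'\in(0,\infty)$ with $S_{\mathrm{vN}}(\rho_\beta)=\sum_ip_i\ln V_i$ and $S_{\mathrm{vN}}(\rho_{\beta'})=-\sum_ip_i\ln p_i+\sum_ip_i\ln V_i$ (where $\rho_\gamma=e^{-\gamma H}/\mathrm{tr}[e^{-\gamma H}]$), define $W_{\mathcal{C}}^{B\infty}(\rho)=\mathrm{tr}[H(\rho-\rho_\beta)]$ and $W_{\mathcal{C}}^{\infty}(\rho)=\mathrm{tr}[H(\rho-\rho_{\beta'})]$. Then $$W_{\mathcal{C}}(\rho)\le W^B_{\mathcal{C}}(\rho)\le W^{B\infty}_{\mathcal{C}}(\rho)\quad\text{and}\quad W_{\mathcal{C}}(\rho)\le W^{\infty}_{\mathcal{C}}(\rho)\le W^{B\infty}_{\mathcal{C}}(\rho).$$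
   Context: Minima are over unitaries $U$ on $\mathcal{H}$; $S_{\mathrm{vN}}(\sigma)=-\mathrm{tr}[\sigma\ln\sigma]$ with $0\ln0=0$. $W^B_{\mathcal{C}}$ is called the Boltzmann ergotropy, $W_{\mathcal{C}}$ the observational ergotropy, and $W^{B\infty}_{\mathcal{C}}$, $W^{\infty}_{\mathcal{C}}$ their large-$N$ versions. *)

theory Defs
  imports "HOL-Analysis.Analysis"
begin

type_synonym 'n cmat = "complex^'n^'n"

definition cadj :: "'n::finite cmat \<Rightarrow> 'n cmat" where
  "cadj A = (\<chi> i j. cnj (A $ j $ i))"

definition smat :: "complex \<Rightarrow> 'n::finite cmat \<Rightarrow> 'n cmat" where
  "smat c A = (\<chi> i j. c * A $ i $ j)"

definition hermitian :: "'n::finite cmat \<Rightarrow> bool" where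
  "hermitian A \<longleftrightarrow> cadj A = A"

definition unitary :: "'n::finite cmat \<Rightarrow> bool" where
  "unitary U \<longleftrightarrow> U ** cadj U = mat 1 \<and> cadj U ** U = mat 1"

definition cdiag :: "(real^'n) \<Rightarrow> 'n::finite cmat" where
  "cdiag d = (\<chi> i j. if i = j then complex_of_real (d $ i) else 0)"

definition psd :: "'n::finite cmat \<Rightarrow> bool" where
  "psd A \<longleftrightarrow> hermitian A \<and> (\<forall>v::complex^'n. 0 \<le> Re (\<Sum>i\<in>UNIV. cnj (v $ i) * (A *v v) $ i))"

definition density :: "'n::finite cmat \<Rightarrow> bool" where
  "density \<rho> \<longleftrightarrow> psd \<rho> \<and> trace \<rho> = 1"

definition hfun :: "(real \<Rightarrow> real) \<Rightarrow> 'n::finite cmat \<Rightarrow> 'n cmat" where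
  "hfun f A = (SOME B. \<exists>U d. unitary U \<and> A = U ** cdiag d ** cadj U
                 \<and> B = U ** cdiag (\<chi> i. f (d $ i)) ** cadj U)"

definition xlnx :: "real \<Rightarrow> real" where
  "xlnx x = (if x = 0 then 0 else x * ln x)"

definition vN_entropy :: "'n::finite cmat \<Rightarrow> real" where
  "vN_entropy \<sigma> = - Re (trace (hfun xlnx \<sigma>))"

definition gibbs :: "real \<Rightarrow> 'n::finite cmat \<Rightarrow> 'n cmat" where
  "gibbs \<gamma> H = (let E = hfun (\<lambda>x. exp (- \<gamma> * x)) H in smat (1 / trace E) E)"

text \<open>min over unitaries of tr[H U X U^dagger] (the minimum is attained; we write it as an infimum).\<close>
definition min_unitary :: "'n::finite cmat \<Rightarrow> 'n cmat \<Rightarrow> real" where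
  "min_unitary H X = Inf {Re (trace (H ** U ** X ** cadj U)) | U. unitary U}"

definition coarse_projectors :: "('i::finite \<Rightarrow> 'n::finite cmat) \<Rightarrow> bool" where
  "coarse_projectors P \<longleftrightarrow>
     (\<forall>i. P i \<noteq> 0 \<and> hermitian (P i) \<and> P i ** P i = P i)
   \<and> (\<forall>i j. i \<noteq> j \<longrightarrow> P i ** P j = 0)
   \<and> (\<Sum>i\<in>UNIV. P i) = mat 1"

definition Vol :: "('i::finite \<Rightarrow> 'n::finite cmat) \<Rightarrow> 'i \<Rightarrow> real" where
  "Vol P i = Re (trace (P i))"

definition prob :: "('i::finite \<Rightarrow> 'n::finite cmat) \<Rightarrow> 'n cmat \<Rightarrow> 'i \<Rightarrow> real" where
  "prob P \<rho> i = Re (trace (P i ** \<rho>))"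

definition rho_cg :: "('i::finite \<Rightarrow> 'n::finite cmat) \<Rightarrow> 'n cmat \<Rightarrow> 'n cmat" where
  "rho_cg P \<rho> = (\<Sum>i\<in>UNIV. smat (complex_of_real (prob P \<rho> i / Vol P i)) (P i))"

definition energy :: "'n::finite cmat \<Rightarrow> 'n cmat \<Rightarrow> real" where
  "energy H \<rho> = Re (trace (H ** \<rho>))"

definition W_B :: "'n::finite cmat \<Rightarrow> ('i::finite \<Rightarrow> 'n cmat) \<Rightarrow> 'n cmat \<Rightarrow> real" where
  "W_B H P \<rho> = energy H \<rho>
     - (\<Sum>i\<in>UNIV. prob P \<rho> i * min_unitary H (smat (complex_of_real (1 / Vol P i)) (P i)))"

definition W_obs :: "'n::finite cmat \<Rightarrow> ('i::finite \<Rightarrow> 'n cmat) \<Rightarrow> 'n cmat \<Rightarrow> real" where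
  "W_obs H P \<rho> = energy H \<rho> - min_unitary H (rho_cg P \<rho>)"

definition W_inf :: "'n::finite cmat \<Rightarrow> real \<Rightarrow> 'n cmat \<Rightarrow> real" where
  "W_inf H \<gamma> \<rho> = Re (trace (H ** (\<rho> - gibbs \<gamma> H)))"

end

theory Submission
  imports Defs
begin


lemma mm_nth: "(A ** B) $ i $ j = (\<Sum>k\<in>UNIV. A$i$k * B$k$j)"
  by (simp add: matrix_matrix_mult_def)
lemma mv_nth: "(A *v x) $ i = (\<Sum>k\<in>UNIV. A$i$k * x$k)"
  by (simp add: matrix_vector_mult_def)
lemma mat_nth: "(mat c :: 'a::zero^'n^'n) $ i $ j = (if i = j then c else 0)"
  by (simp add: mat_def)
lemma cadj_nth[simp]: "cadj A $ i $ j = cnj (A $ j $ i)"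
  by (simp add: cadj_def)
lemma smat_nth[simp]: "smat c A $ i $ j = c * A $ i $ j"
  by (simp add: smat_def)
lemma cdiag_nth: "cdiag d $ i $ j = (if i = j then complex_of_real (d $ i) else 0)"
  by (simp add: cdiag_def)

lemma cadj_cadj[simp]: "cadj (cadj A) = A"
  by (simp add: vec_eq_iff)
lemma cadj_mult: "cadj (A ** B) = cadj B ** cadj A"
  by (simp add: vec_eq_iff mm_nth mult.commute)
lemma cadj_cdiag[simp]: "cadj (cdiag d) = cdiag d"
  by (simp add: vec_eq_iff cdiag_nth)
lemma cadj_mat1[simp]: "cadj (mat 1) = mat 1"
  by (simp add: vec_eq_iff mat_nth)
lemma cadj_add: "cadj (A + B) = cadj A + cadj B"
  by (simp add: vec_eq_iff)
lemma cadj_sum: "cadj (\<Sum>i\<in>S. f i) = (\<Sum>i\<in>S. cadj (f i))"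
  by (induction S rule: infinite_finite_induct) (auto simp: cadj_add vec_eq_iff)
lemma cadj_smat: "cadj (smat c A) = smat (cnj c) (cadj A)"
  by (simp add: vec_eq_iff)

lemma unitary_mat1: "unitary (mat 1)"
  by (simp add: unitary_def)
lemma unitary_cadj: "unitary U \<Longrightarrow> unitary (cadj U)"
  by (simp add: unitary_def)
lemma unitary_mult: "unitary U \<Longrightarrow> unitary V \<Longrightarrow> unitary (U ** V)"
  unfolding unitary_def cadj_mult
  by (metis matrix_mul_assoc matrix_mul_lid)

lemma trace_conj: "unitary U \<Longrightarrow> trace (U ** X ** cadj U) = trace X"
  unfolding unitary_def
  by (metis matrix_mul_assoc matrix_mul_rid trace_mul_sym)

lemma trace_cdiag: "trace (cdiag d) = (\<Sum>i\<in>UNIV. complex_of_real (d $ i))"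
  by (simp add: trace_def cdiag_nth)

lemma hermitian_conj_diag: "hermitian (U ** cdiag d ** cadj U)"
  unfolding hermitian_def cadj_mult by (simp add: matrix_mul_assoc)


definition ip :: "complex^'n::finite \<Rightarrow> complex^'n \<Rightarrow> complex" where
  "ip x y = (\<Sum>i\<in>UNIV. cnj (x$i) * y$i)"

lemma ip_add_r: "ip x (y + z) = ip x y + ip x z"
  by (simp add: ip_def distrib_left sum.distrib)
lemma ip_add_l: "ip (x + y) z = ip x z + ip y z"
  by (simp add: ip_def distrib_right sum.distrib)
lemma ip_diff_r: "ip x (y - z) = ip x y - ip x z"
  by (simp add: ip_def right_diff_distrib sum_subtractf)
lemma ip_smult_r: "ip x (c *s y) = c * ip x y"
  by (simp add: ip_def sum_distrib_left algebra_simps)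
lemma ip_smult_l: "ip (c *s x) y = cnj c * ip x y"
  by (simp add: ip_def sum_distrib_left algebra_simps)
lemma ip_cnj: "ip y x = cnj (ip x y)"
  by (simp add: ip_def mult.commute)
lemma ip_self: "ip x x = complex_of_real (norm x ^ 2)"
proof -
  have "ip x x = (\<Sum>i\<in>UNIV. complex_of_real ((cmod (x$i))^2))"
    unfolding ip_def by (intro sum.cong refl, subst complex_norm_square, rule mult.commute)
  also have "\<dots> = complex_of_real (norm x ^ 2)"
    by (simp add: norm_vec_def L2_set_def sum_nonneg)
  finally show ?thesis .
qed
lemma ip_self_eq0: "ip x x = 0 \<longleftrightarrow> x = 0"
  by (simp add: ip_self)

lemma ip_adj: "ip x (A *v y) = ip (cadj A *v x) y"
proof -
  have "ip x (A *v y) = (\<Sum>i\<in>UNIV. \<Sum>k\<in>UNIV. cnj (x$i) * A$i$k * y$k)"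
    by (simp add: ip_def mv_nth sum_distrib_left mult.assoc)
  also have "\<dots> = (\<Sum>k\<in>UNIV. \<Sum>i\<in>UNIV. cnj (x$i) * A$i$k * y$k)"
    by (rule sum.swap)
  also have "\<dots> = (\<Sum>k\<in>UNIV. cnj (\<Sum>i\<in>UNIV. cnj (A$i$k) * x$i) * y$k)"
    by (simp add: sum_distrib_left sum_distrib_right mult.commute mult.left_commute)
  also have "\<dots> = ip (cadj A *v x) y"
    by (simp add: ip_def mv_nth)
  finally show ?thesis .
qed

lemma herm_ip: assumes "hermitian A" shows "ip x (A *v y) = ip (A *v x) y"
  using ip_adj[of x A y] assms by (simp add: hermitian_def)

lemma mv_smult: "M *v (c *s x) = c *s (M *v (x::complex^'n))"
  by (simp add: vec_eq_iff mv_nth sum_distrib_left algebra_simps)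
lemma mv_add: "M *v (x + y) = M *v x + M *v (y::complex^'n)"
  by (simp add: vec_eq_iff mv_nth sum.distrib algebra_simps)
lemma mv_diff: "M *v (x - y) = M *v x - M *v (y::complex^'n)"
  by (simp add: vec_eq_iff mv_nth sum_subtractf algebra_simps)

lemma quad_aux: "(D::real) > 0 \<Longrightarrow> 2*(c/D)*c + (c/D)^2*d = c^2 * (2*D + d) / D^2"
  by (simp add: power2_eq_square divide_simps) (simp add: algebra_simps)

lemma quad_zero:
  fixes c d :: real
  assumes "\<And>t. 2*t*c + t^2*d \<le> 0"
  shows "c = 0"
proof (rule ccontr)
  assume "c \<noteq> 0"
  define D where "D = 1 + \<bar>d\<bar>"
  have pos: "D > 0" unfolding D_def by simp
  have "2*(c/D)*c + (c/D)^2*d = c^2 * (2*D + d) / D^2"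
    using quad_aux[OF pos] .
  moreover have "c^2 * (2*D + d) / D^2 > 0"
    using \<open>c \<noteq> 0\<close> pos unfolding D_def by (intro divide_pos_pos mult_pos_pos) (auto simp: abs_if)
  ultimately show False using assms[of "c/D"] by linarith
qed


lemma ofreal_smult: "complex_of_real r *s (x::complex^'n) = r *\<^sub>R x"
  by (rule iffD2[OF vec_eq_iff], rule allI, simp only: vector_smult_component vector_scaleR_component, simp add: scaleR_conv_of_real)

lemma ip_scaleR_l: "ip (r *\<^sub>R x) y = complex_of_real r * ip x y"
  by (metis ofreal_smult ip_smult_l complex_cnj_complex_of_real)
lemma ip_scaleR_r: "ip x (r *\<^sub>R y) = complex_of_real r * ip x y"
  by (metis ofreal_smult ip_smult_r)
lemma mv_scaleR: "M *v (r *\<^sub>R x) = r *\<^sub>R (M *v (x::complex^'n))"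
  by (metis ofreal_smult mv_smult)

lemma cont_f: "continuous_on S (\<lambda>x::complex^'n. Re (ip x (A *v x)))"
  unfolding ip_def mv_nth by (intro continuous_intros)

lemma closed_ker: "closed {x::complex^'n. M *v x = 0}"
proof -
  have "{x::complex^'n. M *v x = 0} = (\<Inter>i. {x. (\<Sum>k\<in>UNIV. M$i$k * x$k) = 0})"
    by (auto simp: vec_eq_iff mv_nth)
  also have "closed \<dots>"
    by (intro closed_INT ballI closed_Collect_eq continuous_intros)
  finally show ?thesis .
qed

lemma eig_step:
  fixes A M :: "complex^'n::finite^'n"
  assumes herm: "hermitian A" and inv: "\<And>x. M *v x = 0 \<Longrightarrow> M *v (A *v x) = 0"
    and ne: "x0 \<noteq> 0" "M *v x0 = 0"
  shows "\<exists>v l. M *v v = 0 \<and> norm v = 1 \<and> A *v v = complex_of_real l *s v"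
proof -
  define K where "K = {x::complex^'n. M *v x = 0} \<inter> sphere 0 1"
  define f where "f x = Re (ip x (A *v x))" for x :: "complex^'n"
  have cK: "compact K" unfolding K_def
    by (intro closed_Int_compact closed_ker compact_sphere)
  have x1: "(1/norm x0) *\<^sub>R x0 \<in> K" using ne unfolding K_def
    by (simp add: mv_scaleR)
  hence neK: "K \<noteq> {}" by auto
  obtain v where vK: "v \<in> K" and vmax: "\<And>y. y \<in> K \<Longrightarrow> f y \<le> f v"
    using continuous_attains_sup[OF cK neK cont_f[of K A, folded f_def]] by blast
  define l where "l = f v"
  have Mv: "M *v v = 0" and nv: "norm v = 1" using vK unfolding K_def by auto
  have c1: "f u \<le> l * (norm u)^2" if Mu: "M *v u = 0" for u
  proof (cases "u = 0")
    case True then show ?thesis by (simp add: f_def ip_def)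
  next
    case False
    define x where "x = (1/norm u) *\<^sub>R u"
    have "x \<in> K" using Mu False unfolding K_def x_def by (simp add: mv_scaleR)
    hence "f x \<le> l" using vmax l_def by auto
    moreover have "f x = f u / (norm u)^2"
      unfolding f_def x_def mv_scaleR ip_scaleR_l ip_scaleR_r
      by (simp add: power2_eq_square)
    ultimately show ?thesis using False by (simp add: divide_le_eq)
  qed
  have ipvv: "Re (ip v v) = 1" using nv by (simp add: ip_self)
  have c2: "Re (ip w (A *v v - complex_of_real l *s v)) = 0" if Mw: "M *v w = 0" for w
  proof -
    define c where "c = Re (ip w (A *v v)) - l * Re (ip w v)"
    define d where "d = Re (ip w (A *v w)) - l * Re (ip w w)"
    have "2*t*c + t^2*d \<le> 0" for t
    proof -
      define u where "u = v + t *\<^sub>R w"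
      have Mu: "M *v u = 0" unfolding u_def by (simp add: mv_add mv_scaleR Mv Mw)
      have e1: "f u = f v + 2*t*Re (ip w (A *v v)) + t^2 * Re (ip w (A *v w))"
      proof -
        have "Re (ip v (A *v w)) = Re (ip w (A *v v))"
          using herm_ip[OF herm, of v w] ip_cnj[of w "A *v v"] by simp
        then show ?thesis
          unfolding f_def u_def mv_add mv_scaleR ip_add_l ip_add_r ip_scaleR_l ip_scaleR_r
          by (simp add: power2_eq_square algebra_simps)
      qed
      have e2: "(norm u)^2 = 1 + 2*t*Re (ip w v) + t^2 * Re (ip w w)"
      proof -
        have "(norm u)^2 = Re (ip u u)" by (simp add: ip_self)
        moreover have "Re (ip v w) = Re (ip w v)"
          using ip_cnj[of v w] by simp
        ultimately show ?thesis
          unfolding u_def ip_add_l ip_add_r ip_scaleR_l ip_scaleR_r using ipvv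
          by (simp add: power2_eq_square algebra_simps)
      qed
      have "f u \<le> l * (norm u)^2" using c1[OF Mu] .
      then show ?thesis unfolding e1 e2 c_def d_def l_def
        by (simp add: algebra_simps)
    qed
    hence "c = 0" by (rule quad_zero)
    then show ?thesis unfolding c_def by (simp add: ip_diff_r ip_smult_r)
  qed
  define z where "z = A *v v - complex_of_real l *s v"
  have Mz: "M *v z = 0" unfolding z_def by (simp add: mv_diff mv_smult Mv inv)
  have "ip w z = 0" if Mw: "M *v w = 0" for w
  proof -
    have "Re (ip w z) = 0" using c2[OF Mw] z_def by simp
    moreover have "M *v (\<i> *s w) = 0" by (simp add: mv_smult Mw)
    hence "Re (ip (\<i> *s w) z) = 0" using c2 z_def by simp
    hence "Im (ip w z) = 0" by (simp add: ip_smult_l)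
    ultimately show ?thesis by (simp add: complex_eq_iff)
  qed
  hence "ip z z = 0" using Mz by simp
  hence "z = 0" by (simp add: ip_self_eq0)
  hence "A *v v = complex_of_real l *s v" unfolding z_def by simp
  then show ?thesis using Mv nv by blast
qed


lemma spec_induct:
  fixes A :: "complex^'n::finite^'n"
  assumes herm: "hermitian A"
  shows "k \<le> CARD('n) \<Longrightarrow> \<exists>(S::'n set) v l. card S = k \<and>
     (\<forall>i\<in>S. \<forall>j\<in>S. ip (v i) (v j) = (if i = j then 1 else 0)) \<and>
     (\<forall>i\<in>S. A *v v i = complex_of_real (l i) *s v i)"
proof (induction k)
  case 0
  show ?case by (rule exI[of _ "{}"]) auto
next
  case (Suc k)
  from Suc.IH[OF Suc_leD[OF Suc.prems]] obtain S :: "'n set" and v l where cS: "card S = k"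
    and on: "\<forall>i\<in>S. \<forall>j\<in>S. ip (v i) (v j) = (if i = j then 1 else 0)"
    and ev: "\<forall>i\<in>S. A *v v i = complex_of_real (l i) *s v i" by auto
  have "S \<noteq> UNIV" using cS Suc.prems by auto
  then obtain j where jS: "j \<notin> S" by auto
  define M :: "complex^'n^'n" where "M = (\<chi> i. if i \<in> S then (\<chi> a. cnj (v i $ a)) else 0)"
  have Mx: "(M *v x) $ i = (if i \<in> S then ip (v i) x else 0)" for x i
    by (simp add: M_def mv_nth ip_def)
  have Mx0: "M *v x = 0 \<longleftrightarrow> (\<forall>i\<in>S. ip (v i) x = 0)" for x
    by (auto simp: vec_eq_iff Mx)
  have "row j M = 0" using jS by (simp add: row_def M_def vec_eq_iff)
  hence "det M = 0" by (rule det_zero_row(2))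
  hence "\<not> invertible M" using invertible_det_nz by blast
  hence "\<not> (\<forall>x. M *v x = 0 \<longrightarrow> x = 0)"
    using invertible_left_inverse matrix_left_invertible_ker by blast
  then obtain x0 where x0: "x0 \<noteq> 0" "M *v x0 = 0" by blast
  have inv: "M *v (A *v x) = 0" if "M *v x = 0" for x
  proof -
    have "ip (v i) (A *v x) = 0" if "i \<in> S" for i
      using \<open>M *v x = 0\<close> that ev by (simp add: Mx0 herm_ip[OF herm] ip_smult_l)
    thus ?thesis by (simp add: Mx0)
  qed
  obtain w lw where w: "M *v w = 0" "norm w = 1" "A *v w = complex_of_real lw *s w"
    using eig_step[OF herm inv x0] by blast
  have ww: "ip w w = 1" using w(2) by (simp add: ip_self)
  have vw: "ip (v i) w = 0" if "i \<in> S" for i using w(1) that by (simp add: Mx0)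
  have wv: "ip w (v i) = 0" if "i \<in> S" for i using vw[OF that] ip_cnj[of w "v i"] by simp
  show ?case
  proof (intro exI conjI)
    show "card (insert j S) = Suc k" using cS jS by (simp add: card_insert_if)
    show "\<forall>i\<in>insert j S. \<forall>i'\<in>insert j S. ip ((v(j:=w)) i) ((v(j:=w)) i') = (if i = i' then 1 else 0)"
      using on ww vw wv jS by auto
    show "\<forall>i\<in>insert j S. A *v (v(j:=w)) i = complex_of_real ((l(j:=lw)) i) *s (v(j:=w)) i"
      using ev w(3) jS by auto
  qed
qed

theorem spectral:
  fixes A :: "complex^'n::finite^'n"
  assumes herm: "hermitian A"
  shows "\<exists>U d. unitary U \<and> A = U ** cdiag d ** cadj U"
proof -
  obtain S :: "'n set" and v l where cS: "card S = CARD('n)"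
    and on: "\<forall>i\<in>S. \<forall>j\<in>S. ip (v i) (v j) = (if i = j then 1 else 0)"
    and ev: "\<forall>i\<in>S. A *v v i = complex_of_real (l i) *s v i"
    using spec_induct[OF herm, of "CARD('n)"] by auto
  have SU: "S = UNIV" using cS using card_subset_eq[of UNIV S] by auto
  define U :: "complex^'n^'n" where "U = (\<chi> a i. v i $ a)"
  define d :: "real^'n" where "d = (\<chi> i. l i)"
  have UU: "cadj U ** U = mat 1"
    using on SU by (simp add: vec_eq_iff mm_nth U_def mat_nth ip_def)
  hence UU2: "U ** cadj U = mat 1" by (simp add: matrix_left_right_inverse)
  have AU: "A ** U = U ** cdiag d"
  proof -
    have "(A ** U) $ a $ i = (A *v v i) $ a" for a i
      by (simp add: mm_nth mv_nth U_def)
    moreover have "(U ** cdiag d) $ a $ i = complex_of_real (l i) * v i $ a" for a i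
      by (simp add: mm_nth U_def cdiag_nth d_def if_distrib mult.commute cong: if_cong)
    ultimately show ?thesis using ev SU by (simp add: vec_eq_iff)
  qed
  have "A = A ** U ** cadj U" using UU2 by (simp add: matrix_mul_assoc[symmetric])
  also have "\<dots> = U ** cdiag d ** cadj U" by (simp add: AU)
  finally show ?thesis using UU UU2 unfolding unitary_def by blast
qed


lemma hfun_spec:
  assumes "hermitian A"
  shows "\<exists>W q. unitary W \<and> A = W ** cdiag q ** cadj W \<and> hfun f A = W ** cdiag (\<chi> i. f (q$i)) ** cadj W"
proof -
  obtain U d where Ud: "unitary U" "A = U ** cdiag d ** cadj U" using spectral[OF assms] by blast
  let ?P = "\<lambda>B. \<exists>U d. unitary U \<and> A = U ** cdiag d ** cadj U \<and> B = U ** cdiag (\<chi> i. f (d $ i)) ** cadj U"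
  have "?P (U ** cdiag (\<chi> i. f (d $ i)) ** cadj U)" using Ud by blast
  hence "?P (SOME B. ?P B)" by (rule someI)
  thus ?thesis unfolding hfun_def by blast
qed

lemma trace_diag_conj: "unitary W \<Longrightarrow> Re (trace (W ** cdiag q ** cadj W)) = (\<Sum>i\<in>UNIV. q$i)"
  by (simp add: trace_conj trace_cdiag)

lemma vN_spec:
  assumes "hermitian \<sigma>"
  shows "\<exists>W q. unitary W \<and> \<sigma> = W ** cdiag q ** cadj W \<and> vN_entropy \<sigma> = - (\<Sum>i\<in>UNIV. xlnx (q$i))"
proof -
  obtain W q where "unitary W" "\<sigma> = W ** cdiag q ** cadj W"
    "hfun xlnx \<sigma> = W ** cdiag (\<chi> i. xlnx (q$i)) ** cadj W"
    using hfun_spec[OF assms, of xlnx] by blast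
  thus ?thesis unfolding vN_entropy_def using trace_diag_conj[of W "\<chi> i. xlnx (q$i)"] by auto
qed

lemma conj_unitary_diag: "unitary W \<Longrightarrow> \<sigma> = W ** cdiag q ** cadj W \<Longrightarrow> cadj W ** \<sigma> ** W = cdiag q"
  unfolding unitary_def by (simp add: matrix_mul_assoc) (metis matrix_mul_assoc matrix_mul_rid)

lemma diag_entry: "(Y ** cdiag s ** cadj Y) $ k $ k = complex_of_real (\<Sum>j\<in>UNIV. s$j * (cmod (Y$k$j))^2)"
proof -
  have "(Y ** cdiag s ** cadj Y) $ k $ k = (\<Sum>j\<in>UNIV. Y$k$j * complex_of_real (s$j) * cnj (Y$k$j))"
    by (simp add: mm_nth cdiag_nth if_distrib cong: if_cong)
  also have "\<dots> = (\<Sum>j\<in>UNIV. complex_of_real (s$j * (cmod (Y$k$j))^2))"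
    by (intro sum.cong refl) (simp add: complex_norm_square[symmetric] mult.commute mult.left_commute)
  finally show ?thesis by simp
qed

lemma unitary_rows: "unitary Y \<Longrightarrow> (\<Sum>j\<in>UNIV. (cmod (Y$k$j))^2) = 1"
proof -
  assume "unitary Y"
  hence "(Y ** cadj Y) $ k $ k = 1" unfolding unitary_def by (simp add: mat_nth)
  moreover have "(Y ** cadj Y) $ k $ k = complex_of_real (\<Sum>j\<in>UNIV. (cmod (Y$k$j))^2)"
    by (simp only: mm_nth cadj_nth of_real_sum complex_norm_square)
  ultimately show ?thesis by (metis of_real_eq_1_iff)
qed

lemma unitary_cols: "unitary Y \<Longrightarrow> (\<Sum>k\<in>UNIV. (cmod (Y$k$j))^2) = 1"
proof -
  assume "unitary Y"
  hence "(cadj Y ** Y) $ j $ j = 1" unfolding unitary_def by (simp add: mat_nth)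
  moreover have "(cadj Y ** Y) $ j $ j = complex_of_real (\<Sum>k\<in>UNIV. (cmod (Y$k$j))^2)"
    by (simp only: mm_nth cadj_nth of_real_sum complex_norm_square mult.commute)
  ultimately show ?thesis by (metis of_real_eq_1_iff)
qed

lemma if_mult0: "(if P then a else 0) * b = (if P then a * b else (0::complex))" by simp
lemma cdiag_mult_nth: "(cdiag h ** M) $ i $ j = complex_of_real (h$i) * M$i$j"
  by (simp add: mm_nth cdiag_nth if_mult0)
lemma mult_cdiag_nth: "(M ** cdiag h) $ i $ j = M$i$j * complex_of_real (h$j)"
  by (simp add: mm_nth cdiag_nth if_distrib cong: if_cong)
lemma trace_diag_mult: "trace (cdiag h ** M) = (\<Sum>k\<in>UNIV. complex_of_real (h$k) * M$k$k)"
  by (simp add: trace_def cdiag_mult_nth)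


lemma xlnx_nonpos: "0 \<le> x \<Longrightarrow> x \<le> 1 \<Longrightarrow> xlnx x \<le> 0"
  by (simp add: xlnx_def mult_nonneg_nonpos)

lemma ln_ineq: assumes "s \<ge> 0" "r > 0" shows "s * ln r - xlnx s \<le> r - s"
proof (cases "s = 0")
  case True then show ?thesis using assms by (simp add: xlnx_def)
next
  case False
  hence sp: "s > 0" using assms by simp
  have "ln (r/s) \<le> r/s - 1" using assms sp by (intro ln_le_minus_one) simp
  hence "s * ln (r/s) \<le> s * (r/s - 1)" using sp by (simp add: mult_left_mono)
  thus ?thesis using sp assms False by (simp add: xlnx_def ln_div right_diff_distrib)
qed

lemma xlnx_tangent: assumes "q > 0" "c \<ge> 0" shows "xlnx q + (1 + ln q) * (c - q) \<le> xlnx c"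
proof -
  have "c * ln q - xlnx c \<le> q - c" using ln_ineq[OF assms(2,1)] .
  thus ?thesis using assms by (simp add: xlnx_def algebra_simps)
qed

lemma jensen_xlnx:
  assumes fin: "finite I" and a: "\<And>j. j \<in> I \<Longrightarrow> a j \<ge> 0" and sa: "(\<Sum>j\<in>I. a j) = 1"
    and c: "\<And>j. j \<in> I \<Longrightarrow> c j \<ge> 0"
  shows "xlnx (\<Sum>j\<in>I. a j * c j) \<le> (\<Sum>j\<in>I. a j * xlnx (c j))"
proof -
  define q where "q = (\<Sum>j\<in>I. a j * c j)"
  have q0: "q \<ge> 0" unfolding q_def using a c by (intro sum_nonneg) auto
  show ?thesis
  proof (cases "q = 0")
    case True
    have "a j * c j = 0" if "j \<in> I" for j
      using True sum_nonneg_eq_0_iff[OF fin, of "\<lambda>j. a j * c j"] a c that unfolding q_def by auto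
    hence "a j * xlnx (c j) = 0" if "j \<in> I" for j using that by (auto simp: xlnx_def)
    hence "(\<Sum>j\<in>I. a j * xlnx (c j)) = 0" by (intro sum.neutral) auto
    thus ?thesis using True unfolding q_def by (simp add: xlnx_def)
  next
    case False
    hence qp: "q > 0" using q0 by simp
    have "(\<Sum>j\<in>I. a j * (xlnx q + (1 + ln q) * (c j - q))) \<le> (\<Sum>j\<in>I. a j * xlnx (c j))"
      using xlnx_tangent[OF qp] a c by (intro sum_mono mult_left_mono) auto
    moreover have "(\<Sum>j\<in>I. a j * (xlnx q + (1 + ln q) * (c j - q))) = xlnx q"
    proof -
      have "(\<Sum>j\<in>I. a j * (xlnx q + (1 + ln q) * (c j - q)))
          = (\<Sum>j\<in>I. (xlnx q - (1 + ln q) * q) * a j + (1 + ln q) * (a j * c j))"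
        by (intro sum.cong refl) (simp add: algebra_simps)
      also have "\<dots> = (xlnx q - (1 + ln q) * q) * (\<Sum>j\<in>I. a j) + (1 + ln q) * (\<Sum>j\<in>I. a j * c j)"
        by (simp add: sum.distrib sum_distrib_left)
      also have "\<dots> = (\<Sum>j\<in>I. a j) * (xlnx q - (1 + ln q) * q) + (1 + ln q) * (\<Sum>j\<in>I. a j * c j)"
        by simp
      also have "\<dots> = xlnx q" using sa unfolding q_def[symmetric] by (simp add: algebra_simps)
      finally show ?thesis .
    qed
    ultimately show ?thesis unfolding q_def by simp
  qed
qed

lemma jensen_matrix:
  fixes a :: "'j::finite \<Rightarrow> 'k::finite \<Rightarrow> real"
  assumes a: "\<And>j k. a j k \<ge> 0" and sa: "\<And>k. (\<Sum>j\<in>UNIV. a j k) = 1" and c: "\<And>j. c j \<ge> 0"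
  shows "(\<Sum>k\<in>UNIV. xlnx (\<Sum>j\<in>UNIV. a j k * c j)) \<le> (\<Sum>j\<in>UNIV. (\<Sum>k\<in>UNIV. a j k) * xlnx (c j))"
proof -
  have "(\<Sum>k\<in>UNIV. xlnx (\<Sum>j\<in>UNIV. a j k * c j)) \<le> (\<Sum>k\<in>UNIV. \<Sum>j\<in>UNIV. a j k * xlnx (c j))"
    using a sa c by (intro sum_mono jensen_xlnx) auto
  also have "\<dots> = (\<Sum>j\<in>UNIV. (\<Sum>k\<in>UNIV. a j k) * xlnx (c j))"
    by (subst sum.swap) (simp add: sum_distrib_right)
  finally show ?thesis .
qed

lemma klein_real:
  fixes B :: "'k::finite \<Rightarrow> 'j::finite \<Rightarrow> real" and h :: "'k \<Rightarrow> real" and s :: "'j \<Rightarrow> real"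
  assumes B: "\<And>k j. B k j \<ge> 0" and rows: "\<And>k. (\<Sum>j\<in>UNIV. B k j) = 1"
    and cols: "\<And>j. (\<Sum>k\<in>UNIV. B k j) = 1"
    and s: "\<And>j. s j \<ge> 0" and ss: "(\<Sum>j\<in>UNIV. s j) = 1" and bp: "\<beta> > 0"
  shows "- ln (\<Sum>k\<in>UNIV. exp (- \<beta> * h k)) / \<beta>
     \<le> (\<Sum>k\<in>UNIV. \<Sum>j\<in>UNIV. h k * s j * B k j) + (\<Sum>j\<in>UNIV. xlnx (s j)) / \<beta>"
proof -
  define Z where "Z = (\<Sum>k\<in>UNIV. exp (- \<beta> * h k))"
  have Zp: "Z > 0" unfolding Z_def by (intro sum_pos) auto
  define r where "r k = exp (- \<beta> * h k) / Z" for k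
  have rp: "r k > 0" for k unfolding r_def using Zp by simp
  have lnr: "ln (r k) = - \<beta> * h k - ln Z" for k unfolding r_def using Zp by (simp add: ln_div)
  have sr: "(\<Sum>k\<in>UNIV. r k) = 1" unfolding r_def using Zp by (simp add: sum_divide_distrib[symmetric] Z_def)
  define T where "T = (\<Sum>k\<in>UNIV. \<Sum>j\<in>UNIV. h k * s j * B k j)"
  define X where "X = (\<Sum>j\<in>UNIV. xlnx (s j))"
  have ineq: "(\<Sum>k\<in>UNIV. \<Sum>j\<in>UNIV. B k j * (s j * ln (r k) - xlnx (s j)))
      \<le> (\<Sum>k\<in>UNIV. \<Sum>j\<in>UNIV. B k j * (r k - s j))"
    using ln_ineq[OF s rp] B by (intro sum_mono mult_left_mono) auto
  have s1: "(\<Sum>k\<in>UNIV. \<Sum>j\<in>UNIV. B k j * r k) = 1"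
  proof -
    have "(\<Sum>k\<in>UNIV. \<Sum>j\<in>UNIV. B k j * r k) = (\<Sum>k\<in>UNIV. r k * (\<Sum>j\<in>UNIV. B k j))"
      by (simp add: sum_distrib_left mult.commute)
    thus ?thesis using rows sr by simp
  qed
  have s2: "(\<Sum>k\<in>UNIV. \<Sum>j\<in>UNIV. B k j * s j) = 1"
  proof -
    have "(\<Sum>k\<in>UNIV. \<Sum>j\<in>UNIV. B k j * s j) = (\<Sum>j\<in>UNIV. \<Sum>k\<in>UNIV. B k j * s j)"
      by (rule sum.swap)
    also have "\<dots> = (\<Sum>j\<in>UNIV. s j * (\<Sum>k\<in>UNIV. B k j))"
      by (simp add: sum_distrib_left mult.commute)
    finally show ?thesis using cols ss by simp
  qed
  have s3: "(\<Sum>k\<in>UNIV. \<Sum>j\<in>UNIV. B k j * xlnx (s j)) = X"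
  proof -
    have "(\<Sum>k\<in>UNIV. \<Sum>j\<in>UNIV. B k j * xlnx (s j)) = (\<Sum>j\<in>UNIV. \<Sum>k\<in>UNIV. B k j * xlnx (s j))"
      by (rule sum.swap)
    also have "\<dots> = (\<Sum>j\<in>UNIV. xlnx (s j) * (\<Sum>k\<in>UNIV. B k j))"
      by (simp add: sum_distrib_left mult.commute)
    finally show ?thesis using cols unfolding X_def by simp
  qed
  have r1: "(\<Sum>k\<in>UNIV. \<Sum>j\<in>UNIV. B k j * (r k - s j))
     = (\<Sum>k\<in>UNIV. \<Sum>j\<in>UNIV. B k j * r k) - (\<Sum>k\<in>UNIV. \<Sum>j\<in>UNIV. B k j * s j)"
    by (simp add: right_diff_distrib sum_subtractf)
  have l1: "(\<Sum>k\<in>UNIV. \<Sum>j\<in>UNIV. B k j * (s j * ln (r k) - xlnx (s j)))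
     = (\<Sum>k\<in>UNIV. \<Sum>j\<in>UNIV. (- \<beta>) * (h k * s j * B k j) + (- ln Z) * (B k j * s j) - B k j * xlnx (s j))"
    unfolding lnr by (intro sum.cong refl) (simp add: algebra_simps)
  also have "\<dots> = (- \<beta>) * T + (- ln Z) * (\<Sum>k\<in>UNIV. \<Sum>j\<in>UNIV. B k j * s j)
        - (\<Sum>k\<in>UNIV. \<Sum>j\<in>UNIV. B k j * xlnx (s j))"
    unfolding T_def by (simp add: sum_subtractf sum.distrib sum_distrib_left sum_negf)
  also have "\<dots> = - \<beta> * T - ln Z - X" using s2 s3 by simp
  finally have "- \<beta> * T - ln Z - X \<le> 0" using ineq r1 s1 s2 by simp
  thus ?thesis unfolding Z_def[symmetric] T_def[symmetric] X_def[symmetric] using bp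
    by (simp add: field_simps)
qed


lemma trace_formula:
  assumes U: "unitary U" and H: "H = U ** cdiag h ** cadj U" and W: "unitary W"
  shows "Re (trace (H ** (W ** cdiag s ** cadj W)))
     = (\<Sum>k\<in>UNIV. \<Sum>j\<in>UNIV. h$k * s$j * (cmod ((cadj U ** W)$k$j))^2)"
proof -
  define C where "C = cadj U ** W"
  have "trace (H ** (W ** cdiag s ** cadj W)) = trace (U ** (cdiag h ** cadj U ** (W ** cdiag s ** cadj W)))"
    by (simp add: H matrix_mul_assoc)
  also have "\<dots> = trace ((cdiag h ** cadj U ** (W ** cdiag s ** cadj W)) ** U)"
    by (rule trace_mul_sym)
  also have "\<dots> = trace (cdiag h ** (C ** cdiag s ** cadj C))"
    by (simp add: C_def cadj_mult matrix_mul_assoc)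
  finally have "Re (trace (H ** (W ** cdiag s ** cadj W))) = (\<Sum>k\<in>UNIV. h$k * (\<Sum>j\<in>UNIV. s$j * (cmod (C$k$j))^2))"
    by (simp add: trace_diag_mult diag_entry)
  thus ?thesis unfolding C_def by (simp add: sum_distrib_left mult.assoc)
qed

lemma klein_mat:
  assumes U: "unitary U" and H: "H = U ** cdiag h ** cadj U" and W: "unitary W"
    and s: "\<And>j. s$j \<ge> 0" and ss: "(\<Sum>j\<in>UNIV. s$j) = 1" and bp: "\<beta> > 0"
  shows "- ln (\<Sum>k\<in>UNIV. exp (- \<beta> * h$k)) / \<beta>
     \<le> Re (trace (H ** (W ** cdiag s ** cadj W))) + (\<Sum>j\<in>UNIV. xlnx (s$j)) / \<beta>"
proof -
  define C where "C = cadj U ** W"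
  have C: "unitary C" unfolding C_def by (intro unitary_mult unitary_cadj U W)
  show ?thesis
    unfolding trace_formula[OF U H W] C_def[symmetric]
    using klein_real[of "\<lambda>k j. (cmod (C$k$j))^2" "\<lambda>j. s$j" \<beta> "\<lambda>k. h$k"]
      unitary_rows[OF C] unitary_cols[OF C] s ss bp by simp
qed

lemma smat_conj: "smat c (U ** D ** V) = U ** smat c D ** V"
  by (simp add: vec_eq_iff mm_nth sum_distrib_left sum_distrib_right mult.assoc mult.left_commute)

lemma smat_cdiag: "smat (complex_of_real a) (cdiag e) = cdiag (\<chi> i. a * e$i)"
  by (simp add: vec_eq_iff cdiag_nth)

lemma gibbs_props:
  assumes herm: "hermitian H" and bp: "\<beta> > 0"
  shows "\<exists>U h W q. unitary U \<and> H = U ** cdiag h ** cadj U \<and> unitary W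
     \<and> gibbs \<beta> H = W ** cdiag q ** cadj W \<and> vN_entropy (gibbs \<beta> H) = - (\<Sum>k\<in>UNIV. xlnx (q$k))
     \<and> (\<forall>k. q$k \<ge> 0) \<and> (\<Sum>k\<in>UNIV. q$k) = 1
     \<and> energy H (gibbs \<beta> H) - vN_entropy (gibbs \<beta> H) / \<beta> \<le> - ln (\<Sum>k\<in>UNIV. exp (- \<beta> * h$k)) / \<beta>"
proof -
  obtain U h where U: "unitary U" and H: "H = U ** cdiag h ** cadj U"
    and E: "hfun (\<lambda>x. exp (- \<beta> * x)) H = U ** cdiag (\<chi> i. exp (- \<beta> * h$i)) ** cadj U"
    using hfun_spec[OF herm, of "\<lambda>x. exp (- \<beta> * x)"] by blast
  define Z where "Z = (\<Sum>k\<in>UNIV. exp (- \<beta> * h$k))"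
  have Zp: "Z > 0" unfolding Z_def by (intro sum_pos) auto
  define r :: "real^'a" where "r = (\<chi> k. exp (- \<beta> * h$k) / Z)"
  have rp: "r$k > 0" for k unfolding r_def using Zp by simp
  have sr: "(\<Sum>k\<in>UNIV. r$k) = 1" unfolding r_def using Zp by (simp add: sum_divide_distrib[symmetric] Z_def)
  have lnr: "ln (r$k) = - \<beta> * h$k - ln Z" for k unfolding r_def using Zp by (simp add: ln_div)
  have trE: "trace (hfun (\<lambda>x. exp (- \<beta> * x)) H) = complex_of_real Z"
    unfolding E Z_def by (simp add: trace_conj[OF U] trace_cdiag)
  have G: "gibbs \<beta> H = U ** cdiag r ** cadj U"
  proof -
    have "gibbs \<beta> H = smat (complex_of_real (1/Z)) (U ** cdiag (\<chi> i. exp (- \<beta> * h$i)) ** cadj U)"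
      unfolding gibbs_def Let_def trE by (simp only: E of_real_divide of_real_1)
    also have "\<dots> = U ** cdiag (\<chi> i. (1/Z) * exp (- \<beta> * h$i)) ** cadj U"
      unfolding smat_conj smat_cdiag by simp
    also have "\<dots> = U ** cdiag r ** cadj U" unfolding r_def by simp
    finally show ?thesis .
  qed
  have hG: "hermitian (gibbs \<beta> H)" unfolding G by (rule hermitian_conj_diag)
  obtain W q where W: "unitary W" and Gq: "gibbs \<beta> H = W ** cdiag q ** cadj W"
    and S: "vN_entropy (gibbs \<beta> H) = - (\<Sum>k\<in>UNIV. xlnx (q$k))"
    using vN_spec[OF hG] by blast
  define C where "C = cadj W ** U"
  have C: "unitary C" unfolding C_def by (intro unitary_mult unitary_cadj U W)
  have "cdiag q = cadj W ** (U ** cdiag r ** cadj U) ** W"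
    using conj_unitary_diag[OF W Gq] G by simp
  also have "\<dots> = C ** cdiag r ** cadj C"
    by (simp add: C_def cadj_mult matrix_mul_assoc)
  finally have qC: "cdiag q = C ** cdiag r ** cadj C" .
  have qk: "q$k = (\<Sum>j\<in>UNIV. r$j * (cmod (C$k$j))^2)" for k
  proof -
    have "complex_of_real (q$k) = (cdiag q)$k$k" by (simp add: cdiag_nth)
    also have "\<dots> = complex_of_real (\<Sum>j\<in>UNIV. r$j * (cmod (C$k$j))^2)" unfolding qC diag_entry ..
    finally show ?thesis by (simp only: of_real_eq_iff)
  qed
  have q0: "\<forall>k. q$k \<ge> 0" unfolding qk by (intro allI sum_nonneg mult_nonneg_nonneg) (auto simp: less_imp_le[OF rp])
  have sq: "(\<Sum>k\<in>UNIV. q$k) = 1"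
  proof -
    have "(\<Sum>k\<in>UNIV. q$k) = (\<Sum>j\<in>UNIV. r$j * (\<Sum>k\<in>UNIV. (cmod (C$k$j))^2))"
      unfolding qk by (subst sum.swap) (simp add: sum_distrib_left)
    thus ?thesis using unitary_cols[OF C] sr by simp
  qed
  have J: "(\<Sum>k\<in>UNIV. xlnx (q$k)) \<le> (\<Sum>j\<in>UNIV. xlnx (r$j))"
  proof -
    have "(\<Sum>k\<in>UNIV. xlnx (\<Sum>j\<in>UNIV. (cmod (C$k$j))^2 * r$j))
        \<le> (\<Sum>j\<in>UNIV. (\<Sum>k\<in>UNIV. (cmod (C$k$j))^2) * xlnx (r$j))"
      using jensen_matrix[of "\<lambda>j k. (cmod (C$k$j))^2" "\<lambda>j. r$j"] unitary_rows[OF C] rp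
      by (simp add: less_imp_le)
    thus ?thesis unfolding qk using unitary_cols[OF C] by (simp add: mult.commute)
  qed
  define En where "En = (\<Sum>k\<in>UNIV. h$k * r$k)"
  have energy: "energy H (gibbs \<beta> H) = En"
  proof -
    have "energy H (gibbs \<beta> H) = (\<Sum>k\<in>UNIV. \<Sum>j\<in>UNIV. h$k * r$j * (cmod ((cadj U ** U)$k$j))^2)"
      unfolding energy_def G by (rule trace_formula[OF U H U])
    also have "\<dots> = En"
    proof -
      have d: "(cmod ((cadj U ** U)$k$j))^2 = (if k = j then 1 else 0)" for k j
        using U by (simp add: unitary_def mat_nth)
      have m: "x * (if P then 1 else 0) = (if P then x else (0::real))" for x P by simp
      show ?thesis unfolding d m En_def by simp
    qed
    finally show ?thesis .
  qed
  have xr: "(\<Sum>j\<in>UNIV. xlnx (r$j)) = - \<beta> * En - ln Z"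
  proof -
    have "(\<Sum>j\<in>UNIV. xlnx (r$j)) = (\<Sum>j\<in>UNIV. - \<beta> * (h$j * r$j) - ln Z * r$j)"
      by (intro sum.cong refl) (simp add: xlnx_def lnr algebra_simps)
    also have "\<dots> = - \<beta> * En - ln Z" using sr unfolding En_def
      by (simp add: sum_subtractf sum_negf sum_distrib_left[symmetric])
    finally show ?thesis .
  qed
  have "energy H (gibbs \<beta> H) - vN_entropy (gibbs \<beta> H) / \<beta> \<le> - ln Z / \<beta>"
  proof -
    have "- vN_entropy (gibbs \<beta> H) \<le> - \<beta> * En - ln Z" using S J xr by simp
    hence "(- vN_entropy (gibbs \<beta> H)) / \<beta> \<le> (- \<beta> * En - ln Z) / \<beta>"
      using bp by (intro divide_right_mono) auto
    thus ?thesis using energy bp by (simp add: diff_divide_distrib)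
  qed
  thus ?thesis unfolding Z_def using U H W Gq S q0 sq by blast
qed


lemma mm_sum_left: "(\<Sum>i\<in>S. M i) ** B = (\<Sum>i\<in>S. M i ** (B::complex^'n::finite^'n))"
  by (simp add: vec_eq_iff mm_nth sum_distrib_right) (intro allI, rule sum.swap)
lemma mm_sum_right: "A ** (\<Sum>i\<in>S. M i) = (\<Sum>i\<in>S. (A::complex^'n::finite^'n) ** M i)"
  by (simp add: vec_eq_iff mm_nth sum_distrib_left) (intro allI, rule sum.swap)
lemma smat_mm_left: "smat c A ** B = smat c (A ** (B::complex^'n::finite^'n))"
  by (simp add: vec_eq_iff mm_nth sum_distrib_left mult.assoc)
lemma smat_mm_right: "A ** smat c B = smat c (A ** (B::complex^'n::finite^'n))"
  by (simp add: vec_eq_iff mm_nth sum_distrib_left mult.left_commute)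
lemma trace_sum: "trace (\<Sum>i\<in>S. M i) = (\<Sum>i\<in>S. trace (M i :: complex^'n::finite^'n))"
  by (simp add: trace_def) (subst sum.swap, rule refl)
lemma trace_smat: "trace (smat c A) = c * trace (A::complex^'n::finite^'n)"
  by (simp add: trace_def sum_distrib_left)

definition col :: "complex^'n::finite^'n \<Rightarrow> 'n \<Rightarrow> complex^'n" where
  "col Y k = (\<chi> a. Y$a$k)"

lemma quad_entry: "(cadj Y ** X ** Y)$k$k = ip (col Y k) (X *v col Y k)"
  by (simp add: mm_nth mv_nth ip_def col_def sum_distrib_left sum_distrib_right mult.assoc)
     (subst sum.swap, rule refl)


lemma cp_herm: "coarse_projectors P \<Longrightarrow> hermitian (P i)"
  by (simp add: coarse_projectors_def)
lemma cp_idem: "coarse_projectors P \<Longrightarrow> P i ** P i = P i"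
  by (simp add: coarse_projectors_def)
lemma cp_sum: "coarse_projectors P \<Longrightarrow> (\<Sum>i\<in>UNIV. P i) = mat 1"
  by (simp add: coarse_projectors_def)

lemma proj_quad:
  assumes "coarse_projectors P"
  shows "(cadj Y ** P i ** Y)$k$k = complex_of_real ((norm (P i *v col Y k))^2)"
proof -
  have h: "hermitian (P i)" and id: "P i ** P i = P i" using assms by (auto simp: cp_herm cp_idem)
  have "(cadj Y ** P i ** Y)$k$k = ip (col Y k) ((P i ** P i) *v col Y k)"
    unfolding quad_entry id ..
  also have "\<dots> = ip (P i *v col Y k) (P i *v col Y k)"
    by (simp only: matrix_vector_mul_assoc[symmetric] herm_ip[OF h, of "col Y k" "P i *v col Y k"])
  finally show ?thesis by (simp add: ip_self)
qed

lemma vol_pos: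
  assumes "coarse_projectors P" shows "Vol P i > 0"
proof -
  have Pnz: "P i \<noteq> 0" using assms by (simp add: coarse_projectors_def)
  have "trace (P i) = trace (cadj (mat 1) ** P i ** mat 1)" by simp
  also have "\<dots> = (\<Sum>k\<in>UNIV. complex_of_real ((norm (P i *v col (mat 1) k))^2))"
    unfolding trace_def proj_quad[OF assms] ..
  finally have V: "Vol P i = (\<Sum>k\<in>UNIV. (norm (P i *v col (mat 1) k))^2)"
    unfolding Vol_def by simp
  have cole: "P i *v col (mat 1) k = (\<chi> a. P i $ a $ k)" for k
    by (simp add: vec_eq_iff mv_nth col_def mat_nth if_distrib cong: if_cong)
  have "Vol P i \<ge> 0" unfolding V by (intro sum_nonneg) auto
  moreover have "Vol P i \<noteq> 0"
  proof
    assume "Vol P i = 0"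
    hence "\<forall>k. (norm (P i *v col (mat 1) k))^2 = 0" unfolding V
      using sum_nonneg_eq_0_iff[of UNIV "\<lambda>k. (norm (P i *v col (mat 1) k))^2"] by simp
    hence "\<forall>k. (\<chi> a. P i $ a $ k) = 0" unfolding cole by simp
    hence "P i = 0" by (simp add: vec_eq_iff)
    thus False using Pnz by simp
  qed
  ultimately show ?thesis by simp
qed

lemma prob_nonneg:
  assumes "coarse_projectors P" "density \<rho>" shows "prob P \<rho> i \<ge> 0"
proof -
  have h: "hermitian (P i)" and id: "P i ** P i = P i" using assms by (auto simp: cp_herm cp_idem)
  have psd: "\<And>v. 0 \<le> Re (ip v (\<rho> *v v))" using assms(2) unfolding density_def psd_def ip_def by blast
  have "trace (P i ** \<rho>) = trace (P i ** (P i ** \<rho>))" by (simp add: matrix_mul_assoc id)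
  also have "\<dots> = trace (P i ** \<rho> ** P i)" by (rule trace_mul_sym)
  also have "\<dots> = trace (cadj (P i) ** \<rho> ** P i)" using h by (simp add: hermitian_def)
  also have "\<dots> = (\<Sum>k\<in>UNIV. ip (col (P i) k) (\<rho> *v col (P i) k))"
    unfolding trace_def quad_entry ..
  finally have "prob P \<rho> i = (\<Sum>k\<in>UNIV. Re (ip (col (P i) k) (\<rho> *v col (P i) k)))"
    unfolding prob_def by simp
  thus ?thesis using psd by (simp add: sum_nonneg)
qed

lemma prob_sum:
  assumes "coarse_projectors P" "density \<rho>" shows "(\<Sum>i\<in>UNIV. prob P \<rho> i) = 1"
proof -
  have "(\<Sum>i\<in>UNIV. prob P \<rho> i) = Re (trace ((\<Sum>i\<in>UNIV. P i) ** \<rho>))"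
    unfolding prob_def mm_sum_left trace_sum by simp
  also have "\<dots> = 1" using assms by (simp add: cp_sum density_def)
  finally show ?thesis .
qed


lemma cp_X_herm:
  assumes "coarse_projectors P"
  shows "hermitian (\<Sum>i\<in>UNIV. smat (complex_of_real (c i)) (P i))"
  using assms unfolding hermitian_def cadj_sum cadj_smat by (simp add: cp_herm[unfolded hermitian_def])

lemma proj_entropy:
  assumes cp: "coarse_projectors P" and c: "\<And>i. c i \<ge> 0" and U: "unitary U"
    and \<sigma>: "\<sigma> = U ** (\<Sum>i\<in>UNIV. smat (complex_of_real (c i)) (P i)) ** cadj U"
  shows "\<exists>W q. unitary W \<and> \<sigma> = W ** cdiag q ** cadj W \<and> vN_entropy \<sigma> = - (\<Sum>k\<in>UNIV. xlnx (q$k))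
     \<and> (\<forall>k. q$k \<ge> 0) \<and> (\<Sum>k\<in>UNIV. q$k) = (\<Sum>i\<in>UNIV. c i * Vol P i)
     \<and> (\<Sum>k\<in>UNIV. xlnx (q$k)) \<le> (\<Sum>i\<in>UNIV. Vol P i * xlnx (c i))"
proof -
  define X where "X = (\<Sum>i\<in>UNIV. smat (complex_of_real (c i)) (P i))"
  have hX: "hermitian X" unfolding X_def by (rule cp_X_herm[OF cp])
  have hs: "hermitian \<sigma>" using hX unfolding \<sigma> X_def[symmetric] hermitian_def cadj_mult
    by (simp add: matrix_mul_assoc)
  obtain W q where W: "unitary W" and sq: "\<sigma> = W ** cdiag q ** cadj W"
    and S: "vN_entropy \<sigma> = - (\<Sum>k\<in>UNIV. xlnx (q$k))" using vN_spec[OF hs] by blast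
  define Y where "Y = cadj U ** W"
  have Y: "unitary Y" unfolding Y_def by (intro unitary_mult unitary_cadj U W)
  define a where "a i k = (norm (P i *v col Y k))^2" for i k
  have a0: "a i k \<ge> 0" for i k unfolding a_def by simp
  have cq: "cdiag q = cadj Y ** X ** Y"
    using conj_unitary_diag[OF W sq] unfolding \<sigma> X_def[symmetric] Y_def
    by (simp add: cadj_mult matrix_mul_assoc)
  have qk: "q$k = (\<Sum>i\<in>UNIV. a i k * c i)" for k
  proof -
    have "complex_of_real (q$k) = (cdiag q)$k$k" by (simp add: cdiag_nth)
    also have "\<dots> = (\<Sum>i\<in>UNIV. smat (complex_of_real (c i)) (cadj Y ** P i ** Y))$k$k"
      unfolding cq X_def mm_sum_left mm_sum_right smat_mm_left smat_mm_right ..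
    also have "\<dots> = (\<Sum>i\<in>UNIV. complex_of_real (c i) * complex_of_real (a i k))"
      by (simp add: proj_quad[OF cp] a_def)
    finally have "complex_of_real (q$k) = complex_of_real (\<Sum>i\<in>UNIV. c i * a i k)"
      by (simp only: of_real_mult of_real_sum)
    thus ?thesis by (simp only: of_real_eq_iff mult.commute)
  qed
  have sa: "(\<Sum>i\<in>UNIV. a i k) = 1" for k
  proof -
    have "complex_of_real (\<Sum>i\<in>UNIV. a i k) = (\<Sum>i\<in>UNIV. cadj Y ** P i ** Y)$k$k"
      by (simp add: proj_quad[OF cp] a_def)
    also have "\<dots> = (cadj Y ** (\<Sum>i\<in>UNIV. P i) ** Y)$k$k"
      unfolding mm_sum_left mm_sum_right ..
    also have "\<dots> = 1" using Y cp by (simp add: cp_sum unitary_def mat_nth)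
    finally show ?thesis by (metis of_real_eq_1_iff)
  qed
  have sv: "(\<Sum>k\<in>UNIV. a i k) = Vol P i" for i
  proof -
    have "complex_of_real (\<Sum>k\<in>UNIV. a i k) = trace (cadj Y ** P i ** cadj (cadj Y))"
      by (simp add: trace_def proj_quad[OF cp] a_def)
    also have "\<dots> = trace (P i)" by (rule trace_conj[OF unitary_cadj[OF Y]])
    finally show ?thesis unfolding Vol_def by (metis Re_complex_of_real)
  qed
  have q0: "\<forall>k. q$k \<ge> 0" unfolding qk using a0 c by (auto intro!: sum_nonneg)
  have sumq: "(\<Sum>k\<in>UNIV. q$k) = (\<Sum>i\<in>UNIV. c i * Vol P i)"
    unfolding qk sv[symmetric] by (subst sum.swap) (simp add: sum_distrib_left mult.commute)
  have J: "(\<Sum>k\<in>UNIV. xlnx (q$k)) \<le> (\<Sum>i\<in>UNIV. Vol P i * xlnx (c i))"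
    unfolding qk sv[symmetric] by (rule jensen_matrix[OF a0 sa c])
  show ?thesis using W sq S q0 sumq J by blast
qed


lemma lin_trace:
  "Re (trace (H ** U ** (\<Sum>i\<in>UNIV. smat (complex_of_real (a i)) (Y i)) ** cadj U))
   = (\<Sum>i\<in>UNIV. a i * Re (trace (H ** U ** Y i ** cadj (U::complex^'n::finite^'n))))"
proof -
  have "H ** U ** (\<Sum>i\<in>UNIV. smat (complex_of_real (a i)) (Y i)) ** cadj U
      = (\<Sum>i\<in>UNIV. smat (complex_of_real (a i)) (H ** U ** Y i ** cadj U))"
    by (simp add: mm_sum_left mm_sum_right smat_mm_left smat_mm_right)
  thus ?thesis by (simp add: trace_sum trace_smat)
qed

lemma single_sum:
  fixes P :: "'i::finite \<Rightarrow> complex^'n::finite^'n"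
  shows "smat (complex_of_real a) (P i) = (\<Sum>l\<in>UNIV. smat (complex_of_real (if l = i then a else 0)) (P l))"
proof -
  have "smat (complex_of_real (if l = i then a else 0)) (P l) = (if l = i then smat (complex_of_real a) (P i) else 0)" for l
    by (simp add: vec_eq_iff)
  thus ?thesis by simp
qed

lemma smat_split: "smat (complex_of_real (p / V)) A = smat (complex_of_real p) (smat (complex_of_real (1/V)) A)"
  by (simp add: vec_eq_iff)

lemma xlnx_scale: assumes "V > 0" "p \<ge> 0" shows "V * xlnx (p / V) = xlnx p - p * ln V"
proof (cases "p = 0")
  case True then show ?thesis by (simp add: xlnx_def)
next
  case False
  hence "p > 0" using assms by simp
  thus ?thesis using assms by (simp add: xlnx_def ln_div algebra_simps)
qed

lemma obs_bound:
  assumes cp: "coarse_projectors P" and c: "\<And>l. c l \<ge> 0" and sc: "(\<Sum>l\<in>UNIV. c l * Vol P l) = 1"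
    and U: "unitary U" and ap: "\<alpha> > 0"
    and K: "\<And>W s. unitary W \<Longrightarrow> (\<forall>j. s$j \<ge> 0) \<Longrightarrow> (\<Sum>j\<in>UNIV. s$j) = 1 \<Longrightarrow>
              F \<le> Re (trace (H ** (W ** cdiag s ** cadj W))) + (\<Sum>j\<in>UNIV. xlnx (s$j)) / \<alpha>"
  shows "F - (\<Sum>l\<in>UNIV. Vol P l * xlnx (c l)) / \<alpha>
     \<le> Re (trace (H ** U ** (\<Sum>l\<in>UNIV. smat (complex_of_real (c l)) (P l)) ** cadj U))"
proof -
  define \<sigma> where "\<sigma> = U ** (\<Sum>l\<in>UNIV. smat (complex_of_real (c l)) (P l)) ** cadj U"
  obtain W q where W: "unitary W" and sq: "\<sigma> = W ** cdiag q ** cadj W"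
    and q0: "\<forall>k. q$k \<ge> 0" and sumq: "(\<Sum>k\<in>UNIV. q$k) = (\<Sum>l\<in>UNIV. c l * Vol P l)"
    and J: "(\<Sum>k\<in>UNIV. xlnx (q$k)) \<le> (\<Sum>l\<in>UNIV. Vol P l * xlnx (c l))"
    using proj_entropy[OF cp c U \<sigma>_def] by blast
  have "F \<le> Re (trace (H ** \<sigma>)) + (\<Sum>k\<in>UNIV. xlnx (q$k)) / \<alpha>"
    using K[OF W q0] sumq sc sq by simp
  moreover have "(\<Sum>k\<in>UNIV. xlnx (q$k)) / \<alpha> \<le> (\<Sum>l\<in>UNIV. Vol P l * xlnx (c l)) / \<alpha>"
    using J ap by (simp add: divide_right_mono)
  moreover have "H ** \<sigma> = H ** U ** (\<Sum>l\<in>UNIV. smat (complex_of_real (c l)) (P l)) ** cadj U"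
    unfolding \<sigma>_def by (simp add: matrix_mul_assoc)
  ultimately show ?thesis by simp
qed

lemma sub_ldistrib: "A ** (B - C) = A ** B - A ** (C::complex^'n::finite^'n)"
  by (simp add: vec_eq_iff mm_nth right_diff_distrib sum_subtractf)

theorem mainTheorem10:
  fixes H \<rho> :: "'n::finite cmat" and P :: "'i::finite \<Rightarrow> 'n cmat" and \<beta> \<beta>' :: real
  assumes "hermitian H"
    and "coarse_projectors P"
    and "density \<rho>"
    and "0 < \<beta>" and "0 < \<beta>'"
    and "vN_entropy (gibbs \<beta> H) = (\<Sum>i\<in>UNIV. prob P \<rho> i * ln (Vol P i))"
    and "vN_entropy (gibbs \<beta>' H) =
           - (\<Sum>i\<in>UNIV. xlnx (prob P \<rho> i)) + (\<Sum>i\<in>UNIV. prob P \<rho> i * ln (Vol P i))"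
  shows "W_obs H P \<rho> \<le> W_B H P \<rho> \<and> W_B H P \<rho> \<le> W_inf H \<beta> \<rho>
       \<and> W_obs H P \<rho> \<le> W_inf H \<beta>' \<rho> \<and> W_inf H \<beta>' \<rho> \<le> W_inf H \<beta> \<rho>"
proof -
  note herm = assms(1) and cp = assms(2) and dens = assms(3) and bp = assms(4) and bp' = assms(5)
  define p where "p i = prob P \<rho> i" for i
  define V where "V i = Vol P i" for i
  have p0: "p i \<ge> 0" for i unfolding p_def using prob_nonneg[OF cp dens] .
  have sp: "(\<Sum>i\<in>UNIV. p i) = 1" unfolding p_def using prob_sum[OF cp dens] .
  have p1: "p i \<le> 1" for i
    using member_le_sum[of i UNIV p] p0 sp by simp
  have V0: "V i > 0" for i unfolding V_def using vol_pos[OF cp] .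
  have Vne: "Vol P i \<noteq> 0" for i using vol_pos[OF cp, of i] by simp
  define S where "S = vN_entropy (gibbs \<beta> H)"
  define S' where "S' = vN_entropy (gibbs \<beta>' H)"
  define E where "E = energy H (gibbs \<beta> H)"
  define E' where "E' = energy H (gibbs \<beta>' H)"
  define Hp where "Hp = - (\<Sum>i\<in>UNIV. xlnx (p i))"
  define L where "L = (\<Sum>i\<in>UNIV. p i * ln (V i))"
  have SL: "S = L" unfolding S_def L_def p_def V_def using assms(6) .
  have SL': "S' = Hp + L" unfolding S'_def L_def Hp_def p_def V_def using assms(7) .
  have Hp0: "Hp \<ge> 0" unfolding Hp_def using p0 p1 xlnx_nonpos by (simp add: sum_nonpos)
  obtain U1 h1 W1 q1 where U1: "unitary U1" and H1: "H = U1 ** cdiag h1 ** cadj U1"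
    and G1: "E - S / \<beta> \<le> - ln (\<Sum>k\<in>UNIV. exp (- \<beta> * h1$k)) / \<beta>"
    using gibbs_props[OF herm bp] unfolding E_def S_def by blast
  obtain U2 h2 W2 q2 where U2: "unitary U2" and H2: "H = U2 ** cdiag h2 ** cadj U2"
    and W2: "unitary W2" and Gq2: "gibbs \<beta>' H = W2 ** cdiag q2 ** cadj W2"
    and S2: "S' = - (\<Sum>k\<in>UNIV. xlnx (q2$k))" and q20: "\<forall>k. q2$k \<ge> 0"
    and sq2: "(\<Sum>k\<in>UNIV. q2$k) = 1"
    and G2: "E' - S' / \<beta>' \<le> - ln (\<Sum>k\<in>UNIV. exp (- \<beta>' * h2$k)) / \<beta>'"
    using gibbs_props[OF herm bp'] unfolding E'_def S'_def by blast
  define F where "F = - ln (\<Sum>k\<in>UNIV. exp (- \<beta> * h1$k)) / \<beta>"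
  define F' where "F' = - ln (\<Sum>k\<in>UNIV. exp (- \<beta>' * h2$k)) / \<beta>'"
  have K1: "F \<le> Re (trace (H ** (W ** cdiag s ** cadj W))) + (\<Sum>j\<in>UNIV. xlnx (s$j)) / \<beta>"
    if "unitary W" "\<forall>j. s$j \<ge> 0" "(\<Sum>j\<in>UNIV. s$j) = 1" for W s
    unfolding F_def using klein_mat[OF U1 H1 that(1) _ that(3) bp] that(2) by blast
  have K2: "F' \<le> Re (trace (H ** (W ** cdiag s ** cadj W))) + (\<Sum>j\<in>UNIV. xlnx (s$j)) / \<beta>'"
    if "unitary W" "\<forall>j. s$j \<ge> 0" "(\<Sum>j\<in>UNIV. s$j) = 1" for W s
    unfolding F'_def using klein_mat[OF U2 H2 that(1) _ that(3) bp'] that(2) by blast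
  define X where "X i = smat (complex_of_real (1 / Vol P i)) (P i)" for i
  define A where "A i = {Re (trace (H ** U ** X i ** cadj U)) | U. unitary U}" for i
  define Acg where "Acg = {Re (trace (H ** U ** rho_cg P \<rho> ** cadj U)) | U. unitary U}"
  have mB: "min_unitary H (X i) = Inf (A i)" for i unfolding min_unitary_def A_def ..
  have mcg: "min_unitary H (rho_cg P \<rho>) = Inf Acg" unfolding min_unitary_def Acg_def ..
  have Ane: "A i \<noteq> {}" for i unfolding A_def using unitary_mat1 by blast
  have Acgne: "Acg \<noteq> {}" unfolding Acg_def using unitary_mat1 by blast
  have Xbound: "F + ln (V i) / \<beta> \<le> Re (trace (H ** U ** X i ** cadj U))" if U: "unitary U" for i U
  proof -
    define c where "c l = (if l = i then 1 / Vol P l else 0)" for l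
    have c0: "c l \<ge> 0" for l unfolding c_def using vol_pos[OF cp, of i] by simp
    have sc: "(\<Sum>l\<in>UNIV. c l * Vol P l) = 1"
    proof -
      have "(\<Sum>l\<in>UNIV. c l * Vol P l) = (\<Sum>l\<in>UNIV. if l = i then 1 else 0)"
        unfolding c_def using Vne by (intro sum.cong refl) auto
      thus ?thesis by simp
    qed
    have Xi: "X i = (\<Sum>l\<in>UNIV. smat (complex_of_real (c l)) (P l))"
      unfolding X_def c_def by (subst single_sum[of "1 / Vol P i" P i]) (intro sum.cong refl, auto)
    have "(\<Sum>l\<in>UNIV. Vol P l * xlnx (c l)) = (\<Sum>l\<in>UNIV. if l = i then - ln (V i) else 0)"
      unfolding c_def using Vne vol_pos[OF cp] V_def by (intro sum.cong refl) (auto simp: xlnx_def ln_div)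
    hence e: "(\<Sum>l\<in>UNIV. Vol P l * xlnx (c l)) = - ln (V i)" by simp
    have "F - (- ln (V i)) / \<beta> \<le> Re (trace (H ** U ** X i ** cadj U))"
      using obs_bound[OF cp c0 sc U bp, of F H, OF K1] unfolding e Xi[symmetric] .
    thus ?thesis by (simp add: divide_minus_left)
  qed
  have Albl: "F + ln (V i) / \<beta> \<le> Inf (A i)" for i
    using Ane by (intro cInf_greatest) (auto simp: A_def Xbound)
  have Abdd: "bdd_below (A i)" for i
    unfolding bdd_below_def A_def using Xbound by blast
  define ccg where "ccg l = p l / V l" for l
  have cg0: "ccg l \<ge> 0" for l unfolding ccg_def using p0[of l] V0[of l] by (rule divide_nonneg_pos)
  have cgsum: "(\<Sum>l\<in>UNIV. ccg l * Vol P l) = 1" unfolding ccg_def V_def using sp Vne by simp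
  have rcg: "rho_cg P \<rho> = (\<Sum>l\<in>UNIV. smat (complex_of_real (ccg l)) (P l))"
    unfolding rho_cg_def ccg_def p_def V_def ..
  have cgx: "(\<Sum>l\<in>UNIV. Vol P l * xlnx (ccg l)) = - Hp - L"
  proof -
    have "(\<Sum>l\<in>UNIV. Vol P l * xlnx (ccg l)) = (\<Sum>l\<in>UNIV. xlnx (p l) - p l * ln (V l))"
      unfolding ccg_def V_def[symmetric] by (intro sum.cong refl xlnx_scale V0 p0)
    thus ?thesis unfolding Hp_def L_def by (simp add: sum_subtractf)
  qed
  have cgbound: "F' + S' / \<beta>' \<le> Re (trace (H ** U ** rho_cg P \<rho> ** cadj U))" if U: "unitary U" for U
  proof -
    have "F' - (- Hp - L) / \<beta>' \<le> Re (trace (H ** U ** rho_cg P \<rho> ** cadj U))"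
      using obs_bound[OF cp cg0 cgsum U bp', of F' H, OF K2] unfolding rcg[symmetric] cgx .
    thus ?thesis unfolding SL' by (simp add: diff_divide_distrib add_divide_distrib divide_minus_left)
  qed
  have mcg_lb: "F' + S' / \<beta>' \<le> Inf Acg"
    using Acgne by (intro cInf_greatest) (auto simp: Acg_def cgbound)
  have sum_le: "(\<Sum>i\<in>UNIV. p i * Inf (A i)) \<le> Inf Acg"
  proof (intro cInf_greatest[OF Acgne])
    fix y assume "y \<in> Acg"
    then obtain U where U: "unitary U" and y: "y = Re (trace (H ** U ** rho_cg P \<rho> ** cadj U))"
      unfolding Acg_def by blast
    have "rho_cg P \<rho> = (\<Sum>i\<in>UNIV. smat (complex_of_real (p i)) (X i))"
      unfolding rho_cg_def X_def p_def by (intro sum.cong refl) (rule smat_split)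
    hence "y = (\<Sum>i\<in>UNIV. p i * Re (trace (H ** U ** X i ** cadj U)))"
      unfolding y by (simp add: lin_trace)
    moreover have "p i * Inf (A i) \<le> p i * Re (trace (H ** U ** X i ** cadj U))" for i
      using p0 cInf_lower[OF _ Abdd] U by (intro mult_left_mono) (auto simp: A_def)
    hence "(\<Sum>i\<in>UNIV. p i * Inf (A i)) \<le> (\<Sum>i\<in>UNIV. p i * Re (trace (H ** U ** X i ** cadj U)))"
      by (rule sum_mono)
    ultimately show "(\<Sum>i\<in>UNIV. p i * Inf (A i)) \<le> y" by simp
  qed
  have WB: "W_B H P \<rho> = energy H \<rho> - (\<Sum>i\<in>UNIV. p i * Inf (A i))"
    unfolding W_B_def p_def mB[symmetric] X_def ..
  have Wobs: "W_obs H P \<rho> = energy H \<rho> - Inf Acg"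
    unfolding W_obs_def mcg ..
  have Winf: "W_inf H \<gamma> \<rho> = energy H \<rho> - energy H (gibbs \<gamma> H)" for \<gamma>
    unfolding W_inf_def energy_def sub_ldistrib by (simp add: trace_sub)
  have sumA_lb: "F + L / \<beta> \<le> (\<Sum>i\<in>UNIV. p i * Inf (A i))"
  proof -
    have "(\<Sum>i\<in>UNIV. p i * (F + ln (V i) / \<beta>)) \<le> (\<Sum>i\<in>UNIV. p i * Inf (A i))"
      using p0 Albl by (intro sum_mono mult_left_mono) auto
    moreover have "(\<Sum>i\<in>UNIV. p i * (F + ln (V i) / \<beta>)) = F + L / \<beta>"
    proof -
      have "(\<Sum>i\<in>UNIV. p i * (F + ln (V i) / \<beta>)) = (\<Sum>i\<in>UNIV. p i) * F + (\<Sum>i\<in>UNIV. p i * ln (V i)) / \<beta>"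
        by (simp add: distrib_left sum.distrib sum_distrib_right sum_divide_distrib)
      thus ?thesis unfolding L_def using sp by simp
    qed
    ultimately show ?thesis by simp
  qed
  have EF: "E \<le> F + S / \<beta>" using G1 unfolding F_def by simp
  have EF': "E' \<le> F' + S' / \<beta>'" using G2 unfolding F'_def by simp
  have E_le: "E \<le> E'"
  proof -
    have "F \<le> E' + (\<Sum>j\<in>UNIV. xlnx (q2$j)) / \<beta>"
      using K1[OF W2 q20 sq2] Gq2 unfolding E'_def energy_def by simp
    hence "F + S' / \<beta> \<le> E'" using S2 by (simp add: divide_minus_left)
    moreover have "S / \<beta> \<le> S' / \<beta>" using SL SL' Hp0 bp by (simp add: divide_right_mono)
    ultimately show ?thesis using EF by simp
  qed
  have SLb: "S / \<beta> = L / \<beta>" using SL by simp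
  show ?thesis
    unfolding WB Wobs Winf E_def[symmetric] E'_def[symmetric]
    using sum_le sumA_lb EF SLb mcg_lb EF' E_le by (intro conjI; linarith)
qed


end
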